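(* Let $f\in\mathscr C_J\setminus\mathscr C_I$, let $M=\{1,\dots,m\}$, and let $q$ be a hereditarily thrifty partial function from $X^M$ to $X$ which belongs to $\mathscr C_J$. Then $q$ can be written as a term over $f$ and finitely many partial functions belonging to $\mathscr C_I$, i.e. $q$ equals a partial function obtained by composing $f$ and finitely many partial functions in $\mathscr C_I$ (composition of partial functions being defined exactly where all inner values are defined and lie in the domain of the outer function).
   Context: $X=\omega\times\omega$, elements $(a|b)$ ($x$-coordinate $a$, $y$-coordinate $b$). Width of $Y\subseteq X$: $\sup_n|Y\cap(\omega\times\{n\})|$; $I$ = ideal of subsets of $X$ of finite width; $J$ = ideal of subsets of $X$ meeting each line $\omega\times\{n\}$ in a finite set. For an ideal $K$, $\mathscr C_K$ is the set of finitary operations $g:X^k\to X$ with $g[A^k]\in K$ for all $A\in K$; a partial function from $X^M$ to $X$ is in $\mathscr C_K$ iff it has a total extension in $\mathscr C_K$. For a finite index set $N$, $B^N_k=\{u\in X^N:\exists i\in N\,((u_i)^y<k)\}$; a subset of $X^N$ is bounded iff contained in some $B^N_k$; a partial $p$ from $X^N$ to $Y$ is thrifty iff $p^{-1}[d]$ is bounded for all $d\in Y$. For $S\subseteq M$, $T=M\setminus S$, $c\in X^S$: $p_{\cup c}$ is the partial function on $X^T$ with $p_{\cup c}(z)=p(z\cup c)$. $p$ is hereditarily thrifty iff $p_{\cup c}$ is thrifty for every proper subset $S\subsetneq M$ and every $c\in X^S$. *)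

theory Defs
  imports "HOL-Library.FuncSet"
begin

type_synonym pt = "nat \<times> nat"   (* (a|b): fst = x-coordinate a, snd = y-coordinate b *)

definition line :: "nat \<Rightarrow> pt set" where
  "line n = {u. snd u = n}"

definition idealI :: "pt set set" where
  "idealI = {Y. \<exists>w::nat. \<forall>n. finite (Y \<inter> line n) \<and> card (Y \<inter> line n) \<le> w}"

definition idealJ :: "pt set set" where
  "idealJ = {Y. \<forall>n. finite (Y \<inter> line n)}"

(* total operation g on X^N (tuples = extensional functions on N) lies in C_K *)
definition in_clone :: "pt set set \<Rightarrow> nat set \<Rightarrow> ((nat \<Rightarrow> pt) \<Rightarrow> pt) \<Rightarrow> bool" where
  "in_clone K N g \<longleftrightarrow> (\<forall>A\<in>K. g ` (PiE N (\<lambda>_. A)) \<in> K)"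

definition partial_in_clone :: "pt set set \<Rightarrow> nat set \<Rightarrow> ((nat \<Rightarrow> pt) \<Rightarrow> pt option) \<Rightarrow> bool" where
  "partial_in_clone K N p \<longleftrightarrow>
     (\<exists>g. in_clone K N g \<and> (\<forall>u\<in>PiE N (\<lambda>_. UNIV). \<forall>d. p u = Some d \<longrightarrow> g u = d))"

definition Bset :: "nat set \<Rightarrow> nat \<Rightarrow> (nat \<Rightarrow> pt) set" where
  "Bset N k = {u \<in> PiE N (\<lambda>_. UNIV). \<exists>i\<in>N. snd (u i) < k}"

definition bounded_set :: "nat set \<Rightarrow> (nat \<Rightarrow> pt) set \<Rightarrow> bool" where
  "bounded_set N S \<longleftrightarrow> (\<exists>k. S \<subseteq> Bset N k)"

definition thrifty :: "nat set \<Rightarrow> ((nat \<Rightarrow> pt) \<Rightarrow> 'y option) \<Rightarrow> bool" where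
  "thrifty N p \<longleftrightarrow> (\<forall>d. bounded_set N {u \<in> PiE N (\<lambda>_. UNIV). p u = Some d})"

(* p_{\<union>c}: the partial function z \<mapsto> p (z \<union> c) on X^(M - S) *)
definition restr_fun :: "nat set \<Rightarrow> nat set \<Rightarrow> (nat \<Rightarrow> pt) \<Rightarrow> ((nat \<Rightarrow> pt) \<Rightarrow> 'y option) \<Rightarrow> (nat \<Rightarrow> pt) \<Rightarrow> 'y option" where
  "restr_fun M S c p = (\<lambda>z. if z \<in> PiE (M - S) (\<lambda>_. UNIV)
       then p (\<lambda>i. if i \<in> S then c i else z i) else None)"

definition hereditarily_thrifty :: "nat set \<Rightarrow> ((nat \<Rightarrow> pt) \<Rightarrow> 'y option) \<Rightarrow> bool" where
  "hereditarily_thrifty M p \<longleftrightarrow>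
     (\<forall>S. S \<subset> M \<longrightarrow> (\<forall>c\<in>PiE S (\<lambda>_. UNIV). thrifty (M - S) (restr_fun M S c p)))"

(* terms over f (symbol Fn) and partial functions carried at the nodes (symbol Pn);
   an operation node with argument list ts has arity index set {..<length ts} *)
datatype tm = V nat | Fn "tm list" | Pn "(nat \<Rightarrow> pt) \<Rightarrow> pt option" "tm list"

definition tup :: "pt list \<Rightarrow> nat \<Rightarrow> pt" where
  "tup xs = restrict (nth xs) {..<length xs}"

fun eval :: "((nat \<Rightarrow> pt) \<Rightarrow> pt) \<Rightarrow> tm \<Rightarrow> (nat \<Rightarrow> pt) \<Rightarrow> pt option" where
  "eval f (V i) z = Some (z i)"
| "eval f (Fn ts) z = (case those (map (\<lambda>t. eval f t z) ts) of None \<Rightarrow> None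
                         | Some xs \<Rightarrow> Some (f (tup xs)))"
| "eval f (Pn p ts) z = (case those (map (\<lambda>t. eval f t z) ts) of None \<Rightarrow> None
                         | Some xs \<Rightarrow> p (tup xs))"

fun wf_tm :: "nat \<Rightarrow> nat set \<Rightarrow> tm \<Rightarrow> bool" where
  "wf_tm k M (V i) = (i \<in> M)"
| "wf_tm k M (Fn ts) = (length ts = k \<and> (\<forall>t\<in>set ts. wf_tm k M t))"
| "wf_tm k M (Pn p ts) = (partial_in_clone idealI {..<length ts} p \<and> (\<forall>t\<in>set ts. wf_tm k M t))"

end

theory Submission imports Defs begin


lemma I_subset: "Y \<in> idealI \<Longrightarrow> Z \<subseteq> Y \<Longrightarrow> Z \<in> idealI"
  unfolding idealI_def
proof clarify
  fix w assume h: "\<forall>n. finite (Y \<inter> line n) \<and> card (Y \<inter> line n) \<le> w" and s: "Z \<subseteq> Y"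
  have "\<forall>n. finite (Z \<inter> line n) \<and> card (Z \<inter> line n) \<le> w"
  proof
    fix n
    have "Z \<inter> line n \<subseteq> Y \<inter> line n" using s by blast
    then show "finite (Z \<inter> line n) \<and> card (Z \<inter> line n) \<le> w"
      using h by (meson card_mono finite_subset le_trans)
  qed
  then show "\<exists>w. \<forall>n. finite (Z \<inter> line n) \<and> card (Z \<inter> line n) \<le> w" by blast
qed

lemma I_insert: "Y \<in> idealI \<Longrightarrow> insert p Y \<in> idealI"
  unfolding idealI_def
proof clarify
  fix w assume h: "\<forall>n. finite (Y \<inter> line n) \<and> card (Y \<inter> line n) \<le> w"
  have "\<forall>n. finite (insert p Y \<inter> line n) \<and> card (insert p Y \<inter> line n) \<le> Suc w"
  proof
    fix n
    have s: "insert p Y \<inter> line n \<subseteq> insert p (Y \<inter> line n)" by blast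
    have f: "finite (insert p (Y \<inter> line n))" using h by simp
    have "card (insert p (Y \<inter> line n)) \<le> Suc w" using h
      by (metis card_insert_le_m1 diff_Suc_1 le_SucI zero_less_Suc card_insert_if finite_insert)
    then show "finite (insert p Y \<inter> line n) \<and> card (insert p Y \<inter> line n) \<le> Suc w"
      using s f by (meson card_mono finite_subset le_trans)
  qed
  then show "\<exists>w. \<forall>n. finite (insert p Y \<inter> line n) \<and> card (insert p Y \<inter> line n) \<le> w" by blast
qed

lemma partial_I:
  assumes "\<And>B. B \<in> idealI \<Longrightarrow> \<exists>Y\<in>idealI. \<forall>u\<in>PiE N (\<lambda>_. B). \<forall>d. p u = Some d \<longrightarrow> d \<in> Y"
  shows "partial_in_clone idealI N p"
proof -
  define g where "g u = (case p u of Some d \<Rightarrow> d | None \<Rightarrow> (0,0))" for u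
  have "in_clone idealI N g"
    unfolding in_clone_def
  proof
    fix B assume B: "B \<in> idealI"
    then obtain Y where Y: "Y \<in> idealI" "\<forall>u\<in>PiE N (\<lambda>_. B). \<forall>d. p u = Some d \<longrightarrow> d \<in> Y"
      using assms by blast
    have "g ` PiE N (\<lambda>_. B) \<subseteq> insert (0,0) Y"
      using Y(2) by (auto simp: g_def split: option.splits)
    then show "g ` PiE N (\<lambda>_. B) \<in> idealI" using I_insert[OF Y(1)] I_subset by blast
  qed
  moreover have "\<forall>u\<in>PiE N (\<lambda>_. UNIV). \<forall>d. p u = Some d \<longrightarrow> g u = d" by (simp add: g_def)
  ultimately show ?thesis unfolding partial_in_clone_def by blast
qed

lemma many_points:
  assumes "R \<notin> idealI"
  shows "\<exists>L T. T \<subseteq> R \<inter> line L \<and> finite T \<and> card T = N"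
proof (rule ccontr)
  assume a: "\<not> ?thesis"
  have "\<forall>n. finite (R \<inter> line n) \<and> card (R \<inter> line n) \<le> N"
  proof
    fix n
    have fin: "finite (R \<inter> line n)"
      using a infinite_arbitrarily_large[of "R \<inter> line n" N] by blast
    have "card (R \<inter> line n) \<le> N"
    proof (rule ccontr)
      assume "\<not> card (R \<inter> line n) \<le> N"
      then obtain T where "T \<subseteq> R \<inter> line n" "card T = N" "finite T"
        using obtain_subset_with_card_n[of N "R \<inter> line n"] by auto
      then show False using a by blast
    qed
    then show "finite (R \<inter> line n) \<and> card (R \<inter> line n) \<le> N" using fin by simp
  qed
  then have "R \<in> idealI" unfolding idealI_def by blast
  then show False using assms by simp
qed

definition pos :: "pt set \<Rightarrow> pt \<Rightarrow> nat" where
  "pos B p = card {x\<in>B. snd x = snd p \<and> fst x < fst p}"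

lemma pos_inj:
  assumes "finite (B \<inter> line n)" "p \<in> B" "p' \<in> B" "snd p = n" "snd p' = n" "pos B p = pos B p'"
  shows "p = p'"
proof (rule ccontr)
  have gen: "pos B a < pos B b" if "a \<in> B" "b \<in> B" "snd a = n" "snd b = n" "fst a < fst b" for a b
  proof -
    have "{x\<in>B. snd x = snd a \<and> fst x < fst a} \<subset> {x\<in>B. snd x = snd b \<and> fst x < fst b}"
      using that by auto
    moreover have "finite {x\<in>B. snd x = snd b \<and> fst x < fst b}"
      using assms(1) that by (rule_tac finite_subset[OF _ assms(1)]) (auto simp: line_def)
    ultimately show ?thesis unfolding pos_def by (simp add: psubset_card_mono)
  qed
  assume "p \<noteq> p'"
  then have "fst p \<noteq> fst p'" using assms(4,5) by (metis prod_eqI)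
  then show False using gen[of p p'] gen[of p' p] assms by linarith
qed

lemma pos_lt:
  assumes "p \<in> B" "finite (B \<inter> line (snd p))" "card (B \<inter> line (snd p)) \<le> w"
  shows "pos B p < w"
proof -
  have "{x\<in>B. snd x = snd p \<and> fst x < fst p} \<subset> B \<inter> line (snd p)"
    using assms(1) by (auto simp: line_def)
  then have "pos B p < card (B \<inter> line (snd p))" unfolding pos_def
    using assms(2) by (simp add: psubset_card_mono)
  then show ?thesis using assms(3) by simp
qed

lemma those_nth: "those xs = Some ys \<Longrightarrow> length ys = length xs \<and> (\<forall>i<length xs. xs!i = Some (ys!i))"
proof (induction xs arbitrary: ys)
  case Nil then show ?case by simp
next
  case (Cons x xs)
  then obtain y zs where "x = Some y" "those xs = Some zs" "ys = y # zs"
    by (auto split: option.splits)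
  then show ?case using Cons.IH by (auto simp: nth_Cons split: nat.splits)
qed

lemma those_Some: "those (map (\<lambda>x. Some (g x)) xs) = Some (map g xs)"
  by (induction xs) auto

definition nxt :: "nat set \<Rightarrow> (nat \<Rightarrow> pt) \<Rightarrow> nat set \<Rightarrow> nat" where
  "nxt M z S = (LEAST i. i \<in> M - S \<and> (\<forall>i'\<in>M-S. snd (z i) \<le> snd (z i')))"

primrec st :: "nat set \<Rightarrow> (nat \<Rightarrow> pt) \<Rightarrow> nat \<Rightarrow> nat set" where
  "st M z 0 = {}"
| "st M z (Suc j) = insert (nxt M z (st M z j)) (st M z j)"

lemma nxt_prop:
  assumes "finite M" "S \<subset> M"
  shows "nxt M z S \<in> M - S \<and> (\<forall>i'\<in>M-S. snd (z (nxt M z S)) \<le> snd (z i'))"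
proof -
  have fin: "finite (M - S)" "M - S \<noteq> {}" using assms by auto
  have "Min ((\<lambda>i. snd (z i)) ` (M - S)) \<in> (\<lambda>i. snd (z i)) ` (M - S)"
    using fin by (intro Min_in) auto
  then obtain i0 where i0: "i0 \<in> M - S" "snd (z i0) = Min ((\<lambda>i. snd (z i)) ` (M - S))"
    by (metis (no_types, lifting) imageE)
  have "i0 \<in> M - S \<and> (\<forall>i'\<in>M-S. snd (z i0) \<le> snd (z i'))"
    using i0 fin by auto
  then show ?thesis unfolding nxt_def by (rule LeastI)
qed

lemma st_prop:
  assumes "finite M" "j \<le> card M"
  shows "st M z j \<subseteq> M \<and> card (st M z j) = j"
  using assms(2)
proof (induction j)
  case 0 then show ?case by simp
next
  case (Suc j)
  then have IH: "st M z j \<subseteq> M" "card (st M z j) = j" by auto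
  have "st M z j \<subset> M" using IH Suc.prems by auto
  then have n: "nxt M z (st M z j) \<in> M - st M z j" using nxt_prop[OF assms(1)] by blast
  have "finite (st M z j)" using IH assms(1) finite_subset by blast
  then show ?case using IH n by auto
qed

lemma st_full: "finite M \<Longrightarrow> st M z (card M) = M"
  using st_prop[of M "card M" z] by (meson card_subset_eq order_refl)



locale cons =
  fixes f :: "(nat \<Rightarrow> pt) \<Rightarrow> pt" and k :: nat and q :: "(nat \<Rightarrow> pt) \<Rightarrow> pt option" and m :: nat
    and A :: "pt set" and Kf :: "nat \<Rightarrow> nat set \<Rightarrow> (nat \<Rightarrow> pt) \<Rightarrow> nat"
    and Lf :: "nat \<Rightarrow> nat set \<Rightarrow> (nat \<Rightarrow> pt) \<Rightarrow> nat"
    and tau :: "nat \<Rightarrow> nat set \<Rightarrow> (nat \<Rightarrow> pt) \<Rightarrow> nat \<times> nat \<Rightarrow> pt"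
    and ev :: "pt \<Rightarrow> nat \<Rightarrow> pt"
  assumes dom: "\<And>u. q u \<noteq> None \<Longrightarrow> u \<in> PiE {1..m} (\<lambda>_. UNIV)"
  and Kf: "\<And>S z. S \<subset> {1..m} \<Longrightarrow> z \<in> PiE {1..m} (\<lambda>_. UNIV) \<Longrightarrow> q z \<noteq> None \<Longrightarrow>
            \<exists>i\<in>{1..m}-S. snd (z i) < Kf (snd (the (q z))) S (restrict z S)"
  and tau_img: "\<And>c S s. tau c S s ` (({1..m} - S) \<times> {..<Kf c S s}) \<subseteq> line (Lf c S s) \<inter> f ` PiE {..<k} (\<lambda>_. A)"
  and tau_inj: "\<And>c S s. inj_on (tau c S s) (({1..m} - S) \<times> {..<Kf c S s})"
  and ev: "\<And>t. t \<in> f ` PiE {..<k} (\<lambda>_. A) \<Longrightarrow> ev t \<in> PiE {..<k} (\<lambda>_. A) \<and> f (ev t) = t"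
  and AI: "A \<in> idealI"
begin

abbreviation "MM \<equiv> {1..m}"

definition tg :: "(nat \<Rightarrow> pt) \<Rightarrow> nat \<Rightarrow> pt" where
  "tg z j = tau (snd (the (q z))) (st MM z j) (restrict z (st MM z j))
              (nxt MM z (st MM z j), snd (z (nxt MM z (st MM z j))))"

lemma st_psub: "j < m \<Longrightarrow> st MM z j \<subset> MM"
  using st_prop[of MM j z] by auto

lemma tg_in:
  assumes "q z \<noteq> None" "j < m"
  shows "(nxt MM z (st MM z j), snd (z (nxt MM z (st MM z j))))
           \<in> (MM - st MM z j) \<times> {..<Kf (snd (the (q z))) (st MM z j) (restrict z (st MM z j))}"
proof -
  have ps: "st MM z j \<subset> MM" using st_psub assms(2) by blast
  obtain i where i: "i \<in> MM - st MM z j" "snd (z i) < Kf (snd (the (q z))) (st MM z j) (restrict z (st MM z j))"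
    using Kf[OF ps dom[OF assms(1)] assms(1)] by blast
  have n: "nxt MM z (st MM z j) \<in> MM - st MM z j \<and> (\<forall>i'\<in>MM - st MM z j. snd (z (nxt MM z (st MM z j))) \<le> snd (z i'))"
    using nxt_prop[OF _ ps] by simp
  have "snd (z (nxt MM z (st MM z j))) \<le> snd (z i)" using n i(1) by blast
  then have "snd (z (nxt MM z (st MM z j))) < Kf (snd (the (q z))) (st MM z j) (restrict z (st MM z j))"
    using i(2) by linarith
  then show ?thesis using n by blast
qed

lemma tg_R:
  assumes "q z \<noteq> None" "j < m"
  shows "tg z j \<in> f ` PiE {..<k} (\<lambda>_. A) \<and> tg z j \<in> line (Lf (snd (the (q z))) (st MM z j) (restrict z (st MM z j)))"
  using tau_img tg_in[OF assms] unfolding tg_def by blast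

definition vs :: "tm list" where "vs = map V [1..<Suc m]"
definition dec :: "(nat \<Rightarrow> pt) \<Rightarrow> nat \<Rightarrow> pt" where
  "dec u = (\<lambda>i. if i \<in> MM then u (i - 1) else undefined)"
definition pp :: "nat \<Rightarrow> nat \<Rightarrow> (nat \<Rightarrow> pt) \<Rightarrow> pt option" where
  "pp j l u = (if q (dec u) \<noteq> None then Some (ev (tg (dec u) j) l) else None)"
definition tt :: "nat \<Rightarrow> tm" where
  "tt j = Fn (map (\<lambda>l. Pn (pp j l) vs) [0..<k])"
definition code :: "(nat \<Rightarrow> pt) \<Rightarrow> nat \<Rightarrow> pt" where
  "code z = (\<lambda>l. if l < m then tg z l else if l < 2*m then z (l - m + 1) else undefined)"
definition dec2 :: "(nat \<Rightarrow> pt) \<Rightarrow> nat \<Rightarrow> pt" where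
  "dec2 u = (\<lambda>i. if i \<in> MM then u (m + i - 1) else undefined)"
definition P2 :: "(nat \<Rightarrow> pt) \<Rightarrow> pt option" where
  "P2 u = (if q (dec2 u) \<noteq> None \<and> u = code (dec2 u) then q (dec2 u) else None)"
definition TT :: tm where "TT = Pn P2 (map tt [0..<m] @ vs)"

lemma eval_vs: "map (\<lambda>t. eval f t z) vs = map (\<lambda>i. Some (z i)) [1..<Suc m]"
  by (simp add: vs_def)

lemma dec_tup: "z \<in> PiE MM (\<lambda>_. UNIV) \<Longrightarrow> dec (tup (map z [Suc 0..<Suc m])) = z"
proof (rule ext)
  fix i assume z: "z \<in> PiE MM (\<lambda>_. UNIV)"
  show "dec (tup (map z [Suc 0..<Suc m])) i = z i"
  proof (cases "i \<in> MM")
    case True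
    then have "i - 1 < m" "Suc 0 + (i - 1) = i" by auto
    then show ?thesis using True by (simp add: dec_def tup_def del: upt_Suc)
  next
    case False then show ?thesis unfolding dec_def
      by (subst if_not_P[OF False]) (rule PiE_arb[OF z False, symmetric])
  qed
qed

lemma eval_pp: "z \<in> PiE MM (\<lambda>_. UNIV) \<Longrightarrow>
   eval f (Pn (pp j l) vs) z = (if q z \<noteq> None then Some (ev (tg z j) l) else None)"
proof -
  assume z: "z \<in> PiE MM (\<lambda>_. UNIV)"
  have "eval f (Pn (pp j l) vs) z = pp j l (tup (map z [1..<Suc m]))"
    by (simp only: eval.simps eval_vs those_Some option.case)
  also have "\<dots> = (if q z \<noteq> None then Some (ev (tg z j) l) else None)"
    unfolding pp_def using dec_tup[OF z] by simp
  finally show ?thesis .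
qed

lemma eval_tt: assumes "z \<in> PiE MM (\<lambda>_. UNIV)" "q z \<noteq> None" "j < m"
  shows "eval f (tt j) z = Some (tg z j)"
proof -
  have e: "ev (tg z j) \<in> PiE {..<k} (\<lambda>_. A) \<and> f (ev (tg z j)) = tg z j"
    using ev tg_R[OF assms(2,3)] by blast
  have tq: "tup (map (ev (tg z j)) [0..<k]) = ev (tg z j)"
  proof (rule ext)
    fix x show "tup (map (ev (tg z j)) [0..<k]) x = ev (tg z j) x"
      using e PiE_arb[of "ev (tg z j)" "{..<k}" "\<lambda>_. A" x] by (simp add: tup_def)
  qed
  show ?thesis
  proof -
    have "map (\<lambda>t. eval f t z) (map (\<lambda>l. Pn (pp j l) vs) [0..<k]) = map (\<lambda>l. Some (ev (tg z j) l)) [0..<k]"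
      using eval_pp[OF assms(1)] assms(2) by simp
    then have "eval f (tt j) z = Some (f (tup (map (ev (tg z j)) [0..<k])))"
      by (simp only: tt_def eval.simps those_Some option.case)
    then show ?thesis using tq e by simp
  qed
qed

lemma eval_TT: assumes "z \<in> PiE MM (\<lambda>_. UNIV)" shows "eval f TT z = q z"
proof -
  define xs where "xs = map (\<lambda>t. eval f t z) (map tt [0..<m] @ vs)"
  have lx: "length xs = 2*m" by (simp add: xs_def vs_def)
  have xsv: "xs ! l = Some (z (l - m + 1))" if "m \<le> l" "l < 2*m" for l
    using that by (simp add: xs_def nth_append vs_def del: upt_Suc)
  have d2: "dec2 (tup ys) = z" if "those xs = Some ys" for ys
  proof (rule ext)
    fix i
    have ly: "length ys = 2*m" "\<forall>l<2*m. xs!l = Some (ys!l)" using those_nth[OF that] lx by auto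
    show "dec2 (tup ys) i = z i"
    proof (cases "i \<in> MM")
      case True
      have a: "m \<le> m+i-1" "m+i-1 < 2*m" "m+i-1-m+1 = i" using True by auto
      have "xs!(m+i-1) = Some (ys!(m+i-1))" using ly(2) a(2) by blast
      then have "ys ! (m + i - 1) = z i" using xsv[OF a(1,2)] a(3) by simp
      moreover note a(2)
      ultimately show ?thesis using True ly(1) by (simp add: dec2_def tup_def)
    next
      case False then show ?thesis unfolding dec2_def
        by (subst if_not_P[OF False]) (rule PiE_arb[OF assms False, symmetric])
    qed
  qed
  have ev0: "eval f TT z = (case those xs of None \<Rightarrow> None | Some ys \<Rightarrow> P2 (tup ys))"
    unfolding TT_def xs_def by (simp only: eval.simps)
  show ?thesis
  proof (cases "q z = None")
    case True
    show ?thesis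
    proof (cases "those xs")
      case None then show ?thesis using True ev0 by simp
    next
      case (Some ys) then show ?thesis using True d2[OF Some] ev0
        by (simp add: P2_def)
    qed
  next
    case False
    have xe: "xs = map (\<lambda>l. Some (code z l)) [0..<2*m]"
    proof (rule nth_equalityI)
      show "length xs = length (map (\<lambda>l. Some (code z l)) [0..<2*m])" using lx by simp
      fix l assume "l < length xs"
      then have l: "l < 2*m" using lx by simp
      show "xs ! l = map (\<lambda>l. Some (code z l)) [0..<2*m] ! l"
      proof (cases "l < m")
        case True then show ?thesis using l eval_tt[OF assms False]
          by (simp add: xs_def nth_append code_def)
      next
        case False then show ?thesis using l xsv by (simp add: code_def)
      qed
    qed
    have ty: "those xs = Some (map (code z) [0..<2*m])" using xe those_Some by simp
    have tc: "tup (map (code z) [0..<2*m]) = code z"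
      by (rule ext) (simp add: tup_def code_def)
    show ?thesis using ty tc d2[OF ty] False ev0
      by (simp add: P2_def)
  qed
qed

end

context cons begin

lemma pp_I:
  assumes jm: "j < m" and lk: "l < k"
  shows "partial_in_clone idealI {..<m} (pp j l)"
proof (rule partial_I)
  fix B :: "pt set" assume "B \<in> idealI"
  have "\<forall>u\<in>PiE {..<m} (\<lambda>_. B). \<forall>d. pp j l u = Some d \<longrightarrow> d \<in> A"
  proof (intro ballI allI impI)
    fix u d assume h: "pp j l u = Some d"
    then have qn: "q (dec u) \<noteq> None" and d: "d = ev (tg (dec u) j) l"
      by (auto simp: pp_def split: if_splits)
    have "ev (tg (dec u) j) \<in> PiE {..<k} (\<lambda>_. A)" using ev tg_R[OF qn jm] by blast
    then show "d \<in> A" using d lk by auto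
  qed
  then show "\<exists>Y\<in>idealI. \<forall>u\<in>PiE {..<m} (\<lambda>_. B). \<forall>d. pp j l u = Some d \<longrightarrow> d \<in> Y"
    using AI by blast
qed

definition Yset :: "pt set \<Rightarrow> pt set" where
  "Yset B = {d. \<exists>z. q z = Some d \<and> (\<forall>j<m. tg z j \<in> B) \<and> (\<forall>i\<in>MM. z i \<in> B)}"

lemma P2_Y:
  assumes u: "u \<in> PiE {..<2*m} (\<lambda>_. B)" and p: "P2 u = Some d"
  shows "d \<in> Yset B"
proof -
  define z where "z = dec2 u"
  have p2: "(if q (dec2 u) \<noteq> None \<and> u = code (dec2 u) then q (dec2 u) else None) = Some d"
    using p unfolding P2_def .
  have C: "q (dec2 u) \<noteq> None \<and> u = code (dec2 u)"
  proof (rule ccontr)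
    assume "\<not> (q (dec2 u) \<noteq> None \<and> u = code (dec2 u))"
    then have "(if q (dec2 u) \<noteq> None \<and> u = code (dec2 u) then q (dec2 u) else None) = None"
      by (rule if_not_P)
    then show False using p2 by simp
  qed
  have qz: "q z = Some d" using p2 unfolding if_P[OF C] z_def .
  have uc: "u = code z" using C z_def by blast
  have "tg z j \<in> B" if "j < m" for j
  proof -
    have "tg z j = u j" using that uc by (simp add: code_def)
    then show ?thesis using PiE_mem[OF u, of j] that by simp
  qed
  moreover have "z i \<in> B" if "i \<in> MM" for i
  proof -
    have a: "m \<le> m+i-1" "m+i-1 < 2*m" "m+i-1-m+1 = i" using that by auto
    have "z i = code z (m+i-1)" using a by (simp add: code_def)
    then have "z i = u (m+i-1)" using uc by simp
    then show ?thesis using PiE_mem[OF u, of "m+i-1"] a(2) by simp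
  qed
  ultimately show ?thesis using qz unfolding Yset_def by blast
qed

lemma agree:
  assumes V: "q z \<noteq> None" "q z' \<noteq> None" "snd (the (q z)) = snd (the (q z'))"
    "\<forall>j<m. tg z j \<in> B" "\<forall>j<m. tg z' j \<in> B" "\<forall>i\<in>MM. z i \<in> B" "\<forall>i\<in>MM. z' i \<in> B"
    and w: "\<forall>n. finite (B \<inter> line n)"
    and cd: "\<forall>j<m. pos B (tg z j) = pos B (tg z' j) \<and>
               pos B (z (nxt MM z (st MM z j))) = pos B (z' (nxt MM z' (st MM z' j)))"
  shows "j \<le> m \<Longrightarrow> st MM z j = st MM z' j \<and> (\<forall>i\<in>st MM z j. z i = z' i)"
proof (induction j)
  case 0 show ?case by simp
next
  case (Suc j)
  then have jm: "j < m" by simp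
  from Suc have IH: "st MM z j = st MM z' j" "\<forall>i\<in>st MM z j. z i = z' i" by auto
  define S where "S = st MM z j"
  define c where "c = snd (the (q z))"
  have rs: "restrict z S = restrict z' S" using IH(2) S_def by (auto intro: restrict_ext)
  define a where "a = (nxt MM z S, snd (z (nxt MM z S)))"
  define a' where "a' = (nxt MM z' S, snd (z' (nxt MM z' S)))"
  have aD: "a \<in> (MM - S) \<times> {..<Kf c S (restrict z S)}"
    using tg_in[OF V(1) jm] by (simp add: a_def S_def c_def)
  have aD': "a' \<in> (MM - S) \<times> {..<Kf c S (restrict z S)}"
    using tg_in[OF V(2) jm] IH(1) rs V(3) by (simp add: a'_def S_def c_def)
  have t: "tg z j = tau c S (restrict z S) a" by (simp add: tg_def a_def S_def c_def)
  have t': "tg z' j = tau c S (restrict z S) a'"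
    using IH(1) rs V(3) by (simp add: tg_def a'_def S_def c_def)
  have L: "tg z j \<in> line (Lf c S (restrict z S))" "tg z' j \<in> line (Lf c S (restrict z S))"
    using tau_img aD aD' t t' by blast+
  have "tg z j = tg z' j"
    by (rule pos_inj[where n = "Lf c S (restrict z S)" and B = B])
       (use w V(4,5) jm L cd in \<open>auto simp: line_def\<close>)
  then have "a = a'" using tau_inj aD aD' t t' by (metis inj_onD)
  then have nx: "nxt MM z S = nxt MM z' S" and lv: "snd (z (nxt MM z S)) = snd (z' (nxt MM z S))"
    by (auto simp: a_def a'_def)
  have nM: "nxt MM z S \<in> MM" using aD a_def by auto
  have "z (nxt MM z S) = z' (nxt MM z S)"
    by (rule pos_inj[where n = "snd (z (nxt MM z S))" and B = B])
       (use w V(6,7) nM lv cd jm nx IH(1) S_def in auto)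
  then show ?case using IH nx S_def by auto
qed

lemma Yset_I:
  assumes "B \<in> idealI"
  shows "Yset B \<in> idealI"
proof -
  obtain w where w: "\<forall>n. finite (B \<inter> line n) \<and> card (B \<inter> line n) \<le> w"
    using assms by (auto simp: idealI_def)
  have "finite (Yset B \<inter> line c) \<and> card (Yset B \<inter> line c) \<le> (w*w)^m" for c
  proof -
    define V where "V = {z. q z \<noteq> None \<and> snd (the (q z)) = c \<and> (\<forall>j<m. tg z j \<in> B) \<and> (\<forall>i\<in>MM. z i \<in> B)}"
    define cd where "cd z = map (\<lambda>j. (pos B (tg z j), pos B (z (nxt MM z (st MM z j))))) [0..<m]" for z
    define LS where "LS = {xs. set xs \<subseteq> {..<w} \<times> {..<w} \<and> length xs = m}"
    have sub: "Yset B \<inter> line c \<subseteq> (\<lambda>z. the (q z)) ` V"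
    proof
      fix d assume "d \<in> Yset B \<inter> line c"
      then obtain z where z: "q z = Some d" "\<forall>j<m. tg z j \<in> B" "\<forall>i\<in>MM. z i \<in> B" "snd d = c"
        by (auto simp: Yset_def line_def)
      then have "z \<in> V" by (simp add: V_def)
      then show "d \<in> (\<lambda>z. the (q z)) ` V" using z(1) by force
    qed
    have img: "cd ` V \<subseteq> LS"
    proof
      fix x assume "x \<in> cd ` V"
      then obtain z where z: "z \<in> V" "x = cd z" by blast
      have "pos B (tg z j) < w \<and> pos B (z (nxt MM z (st MM z j))) < w" if "j < m" for j
      proof -
        have "nxt MM z (st MM z j) \<in> MM" using nxt_prop[OF _ st_psub[OF that]] by auto
        then have "z (nxt MM z (st MM z j)) \<in> B" using z(1) by (auto simp: V_def)
        moreover have "tg z j \<in> B" using z(1) that by (auto simp: V_def)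
        ultimately show ?thesis using pos_lt w by blast
      qed
      then show "x \<in> LS" using z(2) by (auto simp: LS_def cd_def)
    qed
    have inj: "inj_on cd V"
    proof
      fix z z' assume zV: "z \<in> V" "z' \<in> V" and e: "cd z = cd z'"
      have cdj: "\<forall>j<m. pos B (tg z j) = pos B (tg z' j) \<and>
               pos B (z (nxt MM z (st MM z j))) = pos B (z' (nxt MM z' (st MM z' j)))"
      proof (intro allI impI)
        fix j assume "j < m"
        then have "cd z ! j = cd z' ! j" using e by simp
        then show "pos B (tg z j) = pos B (tg z' j) \<and>
               pos B (z (nxt MM z (st MM z j))) = pos B (z' (nxt MM z' (st MM z' j)))"
          using \<open>j < m\<close> by (simp add: cd_def)
      qed
      have ag: "st MM z m = st MM z' m \<and> (\<forall>i\<in>st MM z m. z i = z' i)"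
        by (rule agree[where B = B]) (use zV w cdj in \<open>auto simp: V_def\<close>)
      have "st MM z m = MM" using st_full[of MM z] by simp
      then have "\<forall>i\<in>MM. z i = z' i" using ag by simp
      moreover have "z \<in> PiE MM (\<lambda>_. UNIV)" "z' \<in> PiE MM (\<lambda>_. UNIV)"
        using zV dom by (auto simp: V_def)
      ultimately show "z = z'" by (metis PiE_ext)
    qed
    have fLS: "finite LS" unfolding LS_def by (rule finite_lists_length_eq) simp
    have cLS: "card LS = (w*w)^m" unfolding LS_def
      by (subst card_lists_length_eq) (simp_all add: card_cartesian_product)
    have fV: "finite V" using inj_on_finite[OF inj img fLS] .
    have "card V \<le> (w*w)^m" using card_inj_on_le[OF inj img fLS] cLS by simp
    moreover have "card ((\<lambda>z. the (q z)) ` V) \<le> card V" using fV by (rule card_image_le)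
    moreover have "finite ((\<lambda>z. the (q z)) ` V)" using fV by simp
    ultimately show ?thesis using sub by (meson card_mono finite_subset le_trans)
  qed
  then show ?thesis unfolding idealI_def by blast
qed

lemma P2_I: "partial_in_clone idealI {..<2*m} P2"
proof (rule partial_I)
  fix B :: "pt set" assume "B \<in> idealI"
  then show "\<exists>Y\<in>idealI. \<forall>u\<in>PiE {..<2*m} (\<lambda>_. B). \<forall>d. P2 u = Some d \<longrightarrow> d \<in> Y"
    using Yset_I P2_Y by blast
qed

lemma wf_TT: "wf_tm k MM TT"
proof -
  have vs: "\<forall>t\<in>set vs. wf_tm k MM t" by (auto simp: vs_def)
  have lvs: "length vs = m" by (simp add: vs_def)
  have "wf_tm k MM (tt j)" if "j < m" for j
    using pp_I[OF that] vs lvs by (auto simp: tt_def)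
  moreover have "partial_in_clone idealI {..<length (map tt [0..<m] @ vs)} P2" using P2_I lvs by (simp add: mult_2)
  ultimately show ?thesis using vs by (auto simp: TT_def)
qed

end

theorem mainTheorem12:
  fixes f :: "(nat \<Rightarrow> pt) \<Rightarrow> pt" and k :: nat
    and q :: "(nat \<Rightarrow> pt) \<Rightarrow> pt option" and m :: nat
  assumes "in_clone idealJ {..<k} f"
    and "\<not> in_clone idealI {..<k} f"
    and "\<forall>u. q u \<noteq> None \<longrightarrow> u \<in> PiE {1..m} (\<lambda>_. UNIV)"
    and "hereditarily_thrifty {1..m} q"
    and "partial_in_clone idealJ {1..m} q"
  shows "\<exists>t. wf_tm k {1..m} t \<and> (\<forall>z\<in>PiE {1..m} (\<lambda>_. UNIV). eval f t z = q z)"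
proof -
  define M where "M = {1..m}"
  obtain A where AI: "A \<in> idealI" and RI: "f ` PiE {..<k} (\<lambda>_. A) \<notin> idealI"
    using assms(2) by (auto simp: in_clone_def)
  define R where "R = f ` PiE {..<k} (\<lambda>_. A)"
  define PK where "PK c S s K \<longleftrightarrow> (\<forall>z. S \<subset> M \<longrightarrow> z \<in> PiE M (\<lambda>_. UNIV) \<longrightarrow> restrict z S = s \<longrightarrow>
      q z \<noteq> None \<longrightarrow> snd (the (q z)) = c \<longrightarrow> (\<exists>i\<in>M-S. snd (z i) < K))" for c S s K
  have Kex: "\<exists>K. PK c S s K" for c S s
  proof (rule ccontr)
    assume nK: "\<not> (\<exists>K. PK c S s K)"
    have "\<forall>n. \<exists>z. S \<subset> M \<and> z \<in> PiE M (\<lambda>_. UNIV) \<and> restrict z S = s \<and> q z \<noteq> None \<and>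
               snd (the (q z)) = c \<and> (\<forall>i\<in>M-S. n \<le> snd (z i))"
    proof
      fix n
      from nK have "\<not> PK c S s n" by blast
      then show "\<exists>z. S \<subset> M \<and> z \<in> PiE M (\<lambda>_. UNIV) \<and> restrict z S = s \<and> q z \<noteq> None \<and>
               snd (the (q z)) = c \<and> (\<forall>i\<in>M-S. n \<le> snd (z i))"
        unfolding PK_def by (auto simp: not_less)
    qed
    then have "\<exists>zs. \<forall>n. S \<subset> M \<and> zs n \<in> PiE M (\<lambda>_. UNIV) \<and> restrict (zs n) S = s \<and> q (zs n) \<noteq> None \<and>
               snd (the (q (zs n))) = c \<and> (\<forall>i\<in>M-S. n \<le> snd (zs n i))"
      by (rule choice)
    then obtain zs where zs: "\<And>n. S \<subset> M \<and> zs n \<in> PiE M (\<lambda>_. UNIV) \<and> restrict (zs n) S = s \<and> q (zs n) \<noteq> None \<and>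
               snd (the (q (zs n))) = c \<and> (\<forall>i\<in>M-S. n \<le> snd (zs n i))"
      by blast
    have SM: "S \<subset> M" using zs by blast
    have zsS: "zs n i = zs 0 i" if "i \<in> S" for n i
    proof -
      have "restrict (zs n) S i = restrict (zs 0) S i" using zs[of n] zs[of 0] by simp
      then show ?thesis using that by simp
    qed
    define W where "W = (\<Union>n. zs n ` M)"
    have WJ: "W \<in> idealJ" unfolding idealJ_def
    proof (intro CollectI allI)
      fix l
      have "W \<inter> line l \<subseteq> (\<Union>n\<in>{..l}. zs n ` M)"
      proof
        fix x assume "x \<in> W \<inter> line l"
        then obtain n i where x: "i \<in> M" "x = zs n i" "snd x = l" by (auto simp: W_def line_def)
        show "x \<in> (\<Union>n\<in>{..l}. zs n ` M)"
        proof (cases "i \<in> S")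
          case True
          have "x = zs 0 i" using x(2) zsS[OF True, of n] by simp
          then show ?thesis using x(1) by blast
        next
          case False
          then have "n \<le> l" using zs[of n] x by auto
          then show ?thesis using x by auto
        qed
      qed
      moreover have "finite (\<Union>n\<in>{..l}. zs n ` M)" by (simp add: M_def)
      ultimately show "finite (W \<inter> line l)" by (rule finite_subset)
    qed
    obtain g where g: "in_clone idealJ M g" "\<forall>u\<in>PiE M (\<lambda>_. UNIV). \<forall>d. q u = Some d \<longrightarrow> g u = d"
      using assms(5) by (auto simp: partial_in_clone_def M_def)
    define F where "F = g ` PiE M (\<lambda>_. W) \<inter> line c"
    have fF: "finite F" using g(1) WJ unfolding F_def in_clone_def idealJ_def by blast
    have dF: "the (q (zs n)) \<in> F" for n
    proof -
      have z1: "zs n \<in> PiE M (\<lambda>_. W)" using zs[of n] by (auto simp: PiE_iff W_def)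
      obtain d where d: "q (zs n) = Some d" using zs[of n] by blast
      have "g (zs n) = d" using g(2) zs[of n] d by blast
      then show ?thesis using z1 d zs[of n] by (auto simp: F_def line_def)
    qed
    have sP: "s \<in> PiE S (\<lambda>_. UNIV)" using zs[of 0] by auto
    have "thrifty (M - S) (restr_fun M S s q)"
      using assms(4) SM sP by (auto simp: hereditarily_thrifty_def M_def)
    then have "\<forall>d. \<exists>kk. {u \<in> PiE (M-S) (\<lambda>_. UNIV). restr_fun M S s q u = Some d} \<subseteq> Bset (M-S) kk"
      by (auto simp: thrifty_def bounded_set_def)
    then have "\<exists>kd. \<forall>d. {u \<in> PiE (M-S) (\<lambda>_. UNIV). restr_fun M S s q u = Some d} \<subseteq> Bset (M-S) (kd d)"
      by (rule choice)
    then obtain kd where kd: "\<And>d. {u \<in> PiE (M-S) (\<lambda>_. UNIV). restr_fun M S s q u = Some d} \<subseteq> Bset (M-S) (kd d)"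
      by blast
    define N where "N = Max (kd ` F)"
    define d where "d = the (q (zs N))"
    have dN: "kd d \<le> N" using dF[of N] fF by (simp add: N_def d_def)
    define zt where "zt = restrict (zs N) (M - S)"
    have ztP: "zt \<in> PiE (M - S) (\<lambda>_. UNIV)" by (simp add: zt_def)
    have eqz: "(\<lambda>i. if i \<in> S then s i else zt i) = zs N"
    proof
      fix i show "(if i \<in> S then s i else zt i) = zs N i"
      proof (cases "i \<in> S")
        case True
        have "restrict (zs N) S i = s i" using zs[of N] by simp
        then show ?thesis using True by simp
      next
        case False
        show ?thesis
        proof (cases "i \<in> M")
          case True then show ?thesis using False by (simp add: zt_def)
        next
          case F2: False
          have "zs N i = undefined" using zs[of N] F2 by (meson PiE_arb)
          then show ?thesis using False F2 by (simp add: zt_def)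
        qed
      qed
    qed
    have "restr_fun M S s q zt = q (zs N)" using ztP eqz by (simp add: restr_fun_def)
    also have "\<dots> = Some d" using zs[of N] by (auto simp: d_def)
    finally have "zt \<in> Bset (M-S) (kd d)" using kd[of d] ztP by blast
    then obtain i where i: "i \<in> M - S" "snd (zt i) < kd d" by (auto simp: Bset_def)
    have "N \<le> snd (zs N i)" using zs[of N] i(1) by blast
    then show False using i dN by (simp add: zt_def)
  qed
  define Kf where "Kf c S s = (SOME K. PK c S s K)" for c S s
  have Kf: "PK c S s (Kf c S s)" for c S s unfolding Kf_def by (rule someI_ex[OF Kex])
  define D where "D c S s = (M - S) \<times> {..<Kf c S s}" for c S s
  have Dfin: "finite (D c S s)" for c S s by (simp add: D_def M_def)
  have LTex: "\<exists>p. snd p ` D c S s \<subseteq> line (fst p) \<inter> R \<and> inj_on (snd p) (D c S s)" for c S s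
  proof -
    from many_points[OF RI, of "card (D c S s)"] obtain L T where
      T0: "T \<subseteq> f ` PiE {..<k} (\<lambda>_. A) \<inter> line L" "finite T" "card T = card (D c S s)"
      by blast
    have T: "T \<subseteq> R \<inter> line L" "finite T" "card T = card (D c S s)" using T0 unfolding R_def by auto
    obtain tau where "tau ` D c S s \<subseteq> T" "inj_on tau (D c S s)"
      using card_le_inj[OF Dfin[of c S s] T(2)] T(3) by auto
    then show ?thesis using T(1) by (intro exI[of _ "(L, tau)"]) auto
  qed
  define PP where "PP c S s = (SOME p. snd p ` D c S s \<subseteq> line (fst p) \<inter> R \<and> inj_on (snd p) (D c S s))" for c S s
  have PP: "snd (PP c S s) ` D c S s \<subseteq> line (fst (PP c S s)) \<inter> R \<and> inj_on (snd (PP c S s)) (D c S s)" for c S s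
    unfolding PP_def by (rule someI_ex[OF LTex])
  define ev where "ev t = (SOME x. x \<in> PiE {..<k} (\<lambda>_. A) \<and> f x = t)" for t
  have ev: "ev t \<in> PiE {..<k} (\<lambda>_. A) \<and> f (ev t) = t" if "t \<in> R" for t
  proof -
    have "\<exists>x. x \<in> PiE {..<k} (\<lambda>_. A) \<and> f x = t" using that by (auto simp: R_def)
    then show ?thesis unfolding ev_def by (rule someI_ex)
  qed
  interpret C: cons f k q m A Kf "\<lambda>c S s. fst (PP c S s)" "\<lambda>c S s. snd (PP c S s)" ev
  proof
    show "\<And>u. q u \<noteq> None \<Longrightarrow> u \<in> PiE {1..m} (\<lambda>_. UNIV)" using assms(3) by blast
    show "\<exists>i\<in>{1..m}-S. snd (z i) < Kf (snd (the (q z))) S (restrict z S)"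
      if "S \<subset> {1..m}" "z \<in> PiE {1..m} (\<lambda>_. UNIV)" "q z \<noteq> None" for S z
    proof -
      have "S \<subset> M \<longrightarrow> z \<in> PiE M (\<lambda>_. UNIV) \<longrightarrow> restrict z S = restrict z S \<longrightarrow>
          q z \<noteq> None \<longrightarrow> snd (the (q z)) = snd (the (q z)) \<longrightarrow>
          (\<exists>i\<in>M-S. snd (z i) < Kf (snd (the (q z))) S (restrict z S))"
        using Kf[of "snd (the (q z))" S "restrict z S"] unfolding PK_def by (rule spec)
      then show ?thesis using that unfolding M_def by blast
    qed
    show "snd (PP c S s) ` (({1..m} - S) \<times> {..<Kf c S s}) \<subseteq> line (fst (PP c S s)) \<inter> f ` PiE {..<k} (\<lambda>_. A)" for c S s
      using PP[of c S s] unfolding D_def M_def R_def by (rule conjunct1)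
    show "inj_on (snd (PP c S s)) (({1..m} - S) \<times> {..<Kf c S s})" for c S s
      using PP[of c S s] unfolding D_def M_def by (rule conjunct2)
    show "ev t \<in> PiE {..<k} (\<lambda>_. A) \<and> f (ev t) = t" if "t \<in> f ` PiE {..<k} (\<lambda>_. A)" for t
      using ev[of t] that unfolding R_def by blast
    show "A \<in> idealI" by (rule AI)
  qed
  show ?thesis by (intro exI[of _ C.TT] conjI ballI C.wf_TT C.eval_TT)
qed


end
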